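(* Let $\omega=e^{2\pi i/3}$ and let $S$ be a $6\times 6$ complex Hadamard matrix all of whose entries lie in $\{1,\omega,\omega^2\}$. Then $S$ is complex equivalent to the Tao matrix $$S_6^{(0)}=\begin{bmatrix} 1&1&1&1&1&1\\ 1&1&\omega&\omega&\omega^2&\omega^2\\ 1&\omega&1&\omega^2&\omega^2&\omega\\ 1&\omega&\omega^2&1&\omega&\omega^2\\ 1&\omega^2&\omega^2&\omega&1&\omega\\ 1&\omega^2&\omega&\omega^2&\omega&1 \end{bmatrix}.$$
   Context: A complex Hadamard matrix (CHM) of order $n$ is an $n\times n$ complex matrix $H$ all of whose entries have modulus one and which satisfies $HH^\dagger=nI$. A monomial unitary matrix is a unitary matrix each of whose rows and columns has exactly one nonzero entry, that entry having modulus one. Two $n\times n$ matrices $U,V$ are complex equivalent if $U=PVQ$ for some $n\times n$ monomial unitary matrices $P,Q$. *)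

theory Defs
  imports Complex_Main
begin

text \<open>n x n complex matrices are represented as functions nat => nat => complex;
  only the entries with indices i < n, j < n are meaningful.\<close>

definition mat_mult :: "nat \<Rightarrow> (nat \<Rightarrow> nat \<Rightarrow> complex) \<Rightarrow> (nat \<Rightarrow> nat \<Rightarrow> complex) \<Rightarrow> (nat \<Rightarrow> nat \<Rightarrow> complex)" where
  "mat_mult n A B = (\<lambda>i j. \<Sum>k<n. A i k * B k j)"

definition adjoint :: "(nat \<Rightarrow> nat \<Rightarrow> complex) \<Rightarrow> (nat \<Rightarrow> nat \<Rightarrow> complex)" where
  "adjoint A = (\<lambda>i j. cnj (A j i))"

definition mat_eq :: "nat \<Rightarrow> (nat \<Rightarrow> nat \<Rightarrow> complex) \<Rightarrow> (nat \<Rightarrow> nat \<Rightarrow> complex) \<Rightarrow> bool" where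
  "mat_eq n A B = (\<forall>i<n. \<forall>j<n. A i j = B i j)"

definition id_mat :: "(nat \<Rightarrow> nat \<Rightarrow> complex)" where
  "id_mat = (\<lambda>i j. if i = j then 1 else 0)"

definition is_CHM :: "nat \<Rightarrow> (nat \<Rightarrow> nat \<Rightarrow> complex) \<Rightarrow> bool" where
  "is_CHM n H = ((\<forall>i<n. \<forall>j<n. cmod (H i j) = 1) \<and>
      mat_eq n (mat_mult n H (adjoint H)) (\<lambda>i j. of_nat n * id_mat i j))"

definition unitary :: "nat \<Rightarrow> (nat \<Rightarrow> nat \<Rightarrow> complex) \<Rightarrow> bool" where
  "unitary n U = mat_eq n (mat_mult n U (adjoint U)) id_mat"

definition monomial_unitary :: "nat \<Rightarrow> (nat \<Rightarrow> nat \<Rightarrow> complex) \<Rightarrow> bool" where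
  "monomial_unitary n P = (unitary n P \<and>
      (\<forall>i<n. \<exists>!j. j < n \<and> P i j \<noteq> 0) \<and>
      (\<forall>j<n. \<exists>!i. i < n \<and> P i j \<noteq> 0) \<and>
      (\<forall>i<n. \<forall>j<n. P i j \<noteq> 0 \<longrightarrow> cmod (P i j) = 1))"

definition complex_equivalent :: "nat \<Rightarrow> (nat \<Rightarrow> nat \<Rightarrow> complex) \<Rightarrow> (nat \<Rightarrow> nat \<Rightarrow> complex) \<Rightarrow> bool" where
  "complex_equivalent n U V = (\<exists>P Q. monomial_unitary n P \<and> monomial_unitary n Q \<and>
      mat_eq n U (mat_mult n (mat_mult n P V) Q))"

definition omega3 :: complex where
  "omega3 = exp (2 * of_real pi * \<i> / 3)"

definition tao_exps :: "nat list list" where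
  "tao_exps = [[0,0,0,0,0,0],
               [0,0,1,1,2,2],
               [0,1,0,2,2,1],
               [0,1,2,0,1,2],
               [0,2,2,1,0,1],
               [0,2,1,2,1,0]]"

definition tao6 :: "nat \<Rightarrow> nat \<Rightarrow> complex" where
  "tao6 i j = omega3 ^ (tao_exps ! i ! j)"

end

theory Submission imports Defs "HOL-Combinatorics.Permutations" begin

definition bal :: "nat list \<Rightarrow> bool" where
  "bal xs = (length (filter (\<lambda>x. x = 0) xs) = 2 \<and> length (filter (\<lambda>x. x = 1) xs) = 2 \<and> length (filter (\<lambda>x. x = 2) xs) = 2)"

definition compat3 :: "nat list \<Rightarrow> nat list \<Rightarrow> bool" where
  "compat3 a b = bal (map (\<lambda>(x,y). (x + 2*y) mod 3) (zip a b))"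

fun lists3 :: "nat \<Rightarrow> nat list list" where
  "lists3 0 = [[]]"
| "lists3 (Suc n) = concat (map (\<lambda>x. map (\<lambda>xs. x # xs) (lists3 n)) [0,1,2])"

definition canon :: "nat list" where "canon = [0,0,1,1,2,2]"

definition Vl :: "nat list list" where
  "Vl = filter (\<lambda>v. hd v = 0 \<and> bal v) (lists3 6)"

definition Wl :: "nat list list" where
  "Wl = filter (compat3 canon) Vl"

definition validp :: "nat list \<Rightarrow> bool" where
  "validp p = (length p = 6 \<and> distinct p \<and> list_all (\<lambda>x. x < 6) p)"

definition ptable :: "(nat list \<times> nat list) list" where
  "ptable = [([0,0,1,1,2,2],[0,1,2,3,4,5]), ([0,0,1,2,1,2],[0,1,2,4,3,5]), ([0,0,1,2,2,1],[0,1,2,5,3,4]), ([0,0,2,1,1,2],[0,1,3,4,2,5]), ([0,0,2,1,2,1],[0,1,3,5,2,4]), ([0,0,2,2,1,1],[0,1,4,5,2,3]), ([0,1,0,1,2,2],[0,2,1,3,4,5]), ([0,1,0,2,1,2],[0,2,1,4,3,5]), ([0,1,0,2,2,1],[0,2,1,5,3,4]), ([0,1,1,0,2,2],[0,3,1,2,4,5]), ([0,1,1,2,0,2],[0,4,1,2,3,5]), ([0,1,1,2,2,0],[0,5,1,2,3,4]), ([0,1,2,0,1,2],[0,3,1,4,2,5]), ([0,1,2,0,2,1],[0,3,1,5,2,4]), ([0,1,2,1,0,2],[0,4,1,3,2,5]), ([0,1,2,1,2,0],[0,5,1,3,2,4]), ([0,1,2,2,0,1],[0,4,1,5,2,3]),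 ([0,1,2,2,1,0],[0,5,1,4,2,3]), ([0,2,0,1,1,2],[0,2,3,4,1,5]), ([0,2,0,1,2,1],[0,2,3,5,1,4]), ([0,2,0,2,1,1],[0,2,4,5,1,3]), ([0,2,1,0,1,2],[0,3,2,4,1,5]), ([0,2,1,0,2,1],[0,3,2,5,1,4]), ([0,2,1,1,0,2],[0,4,2,3,1,5]), ([0,2,1,1,2,0],[0,5,2,3,1,4]), ([0,2,1,2,0,1],[0,4,2,5,1,3]), ([0,2,1,2,1,0],[0,5,2,4,1,3]), ([0,2,2,0,1,1],[0,3,4,5,1,2]), ([0,2,2,1,0,1],[0,4,3,5,1,2]), ([0,2,2,1,1,0],[0,5,3,4,1,2])]"

definition ctable :: "(nat list list \<times> nat list \<times> nat list \<times> nat list \<times> nat list) list" where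
  "ctable = [([[0,0,0,0,0,0],[0,0,1,1,2,2],[0,1,0,2,1,2],[0,1,2,0,2,1],[0,2,1,2,0,1],[0,2,2,1,1,0]],[0,1,2,3,5,4],[0,1,2,3,5,4],[0,0,0,0,0,0],[0,0,0,0,0,0]),
 ([[0,0,0,0,0,0],[0,0,1,1,2,2],[0,1,0,2,1,2],[0,1,2,0,2,1],[0,2,2,1,1,0],[0,2,1,2,0,1]],[0,1,2,3,4,5],[0,1,2,3,5,4],[0,0,0,0,0,0],[0,0,0,0,0,0]),
 ([[0,0,0,0,0,0],[0,0,1,1,2,2],[0,1,0,2,1,2],[0,2,1,2,0,1],[0,1,2,0,2,1],[0,2,2,1,1,0]],[0,1,2,5,3,4],[0,1,2,3,5,4],[0,0,0,0,0,0],[0,0,0,0,0,0]),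
 ([[0,0,0,0,0,0],[0,0,1,1,2,2],[0,1,0,2,1,2],[0,2,1,2,0,1],[0,2,2,1,1,0],[0,1,2,0,2,1]],[0,1,2,5,4,3],[0,1,2,3,5,4],[0,0,0,0,0,0],[0,0,0,0,0,0]),
 ([[0,0,0,0,0,0],[0,0,1,1,2,2],[0,1,0,2,1,2],[0,2,2,1,1,0],[0,1,2,0,2,1],[0,2,1,2,0,1]],[0,1,2,4,3,5],[0,1,2,3,5,4],[0,0,0,0,0,0],[0,0,0,0,0,0]),
 ([[0,0,0,0,0,0],[0,0,1,1,2,2],[0,1,0,2,1,2],[0,2,2,1,1,0],[0,2,1,2,0,1],[0,1,2,0,2,1]],[0,1,2,4,5,3],[0,1,2,3,5,4],[0,0,0,0,0,0],[0,0,0,0,0,0]),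
 ([[0,0,0,0,0,0],[0,0,1,1,2,2],[0,1,0,2,2,1],[0,1,2,0,1,2],[0,2,1,2,1,0],[0,2,2,1,0,1]],[0,1,2,3,5,4],[0,1,2,3,4,5],[0,0,0,0,0,0],[0,0,0,0,0,0]),
 ([[0,0,0,0,0,0],[0,0,1,1,2,2],[0,1,0,2,2,1],[0,1,2,0,1,2],[0,2,2,1,0,1],[0,2,1,2,1,0]],[0,1,2,3,4,5],[0,1,2,3,4,5],[0,0,0,0,0,0],[0,0,0,0,0,0]),
 ([[0,0,0,0,0,0],[0,0,1,1,2,2],[0,1,0,2,2,1],[0,2,1,2,1,0],[0,1,2,0,1,2],[0,2,2,1,0,1]],[0,1,2,5,3,4],[0,1,2,3,4,5],[0,0,0,0,0,0],[0,0,0,0,0,0]),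
 ([[0,0,0,0,0,0],[0,0,1,1,2,2],[0,1,0,2,2,1],[0,2,1,2,1,0],[0,2,2,1,0,1],[0,1,2,0,1,2]],[0,1,2,5,4,3],[0,1,2,3,4,5],[0,0,0,0,0,0],[0,0,0,0,0,0]),
 ([[0,0,0,0,0,0],[0,0,1,1,2,2],[0,1,0,2,2,1],[0,2,2,1,0,1],[0,1,2,0,1,2],[0,2,1,2,1,0]],[0,1,2,4,3,5],[0,1,2,3,4,5],[0,0,0,0,0,0],[0,0,0,0,0,0]),
 ([[0,0,0,0,0,0],[0,0,1,1,2,2],[0,1,0,2,2,1],[0,2,2,1,0,1],[0,2,1,2,1,0],[0,1,2,0,1,2]],[0,1,2,4,5,3],[0,1,2,3,4,5],[0,0,0,0,0,0],[0,0,0,0,0,0]),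
 ([[0,0,0,0,0,0],[0,0,1,1,2,2],[0,1,2,0,1,2],[0,1,0,2,2,1],[0,2,1,2,1,0],[0,2,2,1,0,1]],[0,1,3,2,5,4],[0,1,2,3,4,5],[0,0,0,0,0,0],[0,0,0,0,0,0]),
 ([[0,0,0,0,0,0],[0,0,1,1,2,2],[0,1,2,0,1,2],[0,1,0,2,2,1],[0,2,2,1,0,1],[0,2,1,2,1,0]],[0,1,3,2,4,5],[0,1,2,3,4,5],[0,0,0,0,0,0],[0,0,0,0,0,0]),
 ([[0,0,0,0,0,0],[0,0,1,1,2,2],[0,1,2,0,1,2],[0,2,1,2,1,0],[0,1,0,2,2,1],[0,2,2,1,0,1]],[0,1,3,5,2,4],[0,1,2,3,4,5],[0,0,0,0,0,0],[0,0,0,0,0,0]),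
 ([[0,0,0,0,0,0],[0,0,1,1,2,2],[0,1,2,0,1,2],[0,2,1,2,1,0],[0,2,2,1,0,1],[0,1,0,2,2,1]],[0,1,3,5,4,2],[0,1,2,3,4,5],[0,0,0,0,0,0],[0,0,0,0,0,0]),
 ([[0,0,0,0,0,0],[0,0,1,1,2,2],[0,1,2,0,1,2],[0,2,2,1,0,1],[0,1,0,2,2,1],[0,2,1,2,1,0]],[0,1,3,4,2,5],[0,1,2,3,4,5],[0,0,0,0,0,0],[0,0,0,0,0,0]),
 ([[0,0,0,0,0,0],[0,0,1,1,2,2],[0,1,2,0,1,2],[0,2,2,1,0,1],[0,2,1,2,1,0],[0,1,0,2,2,1]],[0,1,3,4,5,2],[0,1,2,3,4,5],[0,0,0,0,0,0],[0,0,0,0,0,0]),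
 ([[0,0,0,0,0,0],[0,0,1,1,2,2],[0,1,2,0,2,1],[0,1,0,2,1,2],[0,2,1,2,0,1],[0,2,2,1,1,0]],[0,1,3,2,5,4],[0,1,2,3,5,4],[0,0,0,0,0,0],[0,0,0,0,0,0]),
 ([[0,0,0,0,0,0],[0,0,1,1,2,2],[0,1,2,0,2,1],[0,1,0,2,1,2],[0,2,2,1,1,0],[0,2,1,2,0,1]],[0,1,3,2,4,5],[0,1,2,3,5,4],[0,0,0,0,0,0],[0,0,0,0,0,0]),
 ([[0,0,0,0,0,0],[0,0,1,1,2,2],[0,1,2,0,2,1],[0,2,1,2,0,1],[0,1,0,2,1,2],[0,2,2,1,1,0]],[0,1,3,5,2,4],[0,1,2,3,5,4],[0,0,0,0,0,0],[0,0,0,0,0,0]),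
 ([[0,0,0,0,0,0],[0,0,1,1,2,2],[0,1,2,0,2,1],[0,2,1,2,0,1],[0,2,2,1,1,0],[0,1,0,2,1,2]],[0,1,3,5,4,2],[0,1,2,3,5,4],[0,0,0,0,0,0],[0,0,0,0,0,0]),
 ([[0,0,0,0,0,0],[0,0,1,1,2,2],[0,1,2,0,2,1],[0,2,2,1,1,0],[0,1,0,2,1,2],[0,2,1,2,0,1]],[0,1,3,4,2,5],[0,1,2,3,5,4],[0,0,0,0,0,0],[0,0,0,0,0,0]),
 ([[0,0,0,0,0,0],[0,0,1,1,2,2],[0,1,2,0,2,1],[0,2,2,1,1,0],[0,2,1,2,0,1],[0,1,0,2,1,2]],[0,1,3,4,5,2],[0,1,2,3,5,4],[0,0,0,0,0,0],[0,0,0,0,0,0]),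
 ([[0,0,0,0,0,0],[0,0,1,1,2,2],[0,2,1,2,0,1],[0,1,0,2,1,2],[0,1,2,0,2,1],[0,2,2,1,1,0]],[0,1,5,2,3,4],[0,1,2,3,5,4],[0,0,0,0,0,0],[0,0,0,0,0,0]),
 ([[0,0,0,0,0,0],[0,0,1,1,2,2],[0,2,1,2,0,1],[0,1,0,2,1,2],[0,2,2,1,1,0],[0,1,2,0,2,1]],[0,1,5,2,4,3],[0,1,2,3,5,4],[0,0,0,0,0,0],[0,0,0,0,0,0]),
 ([[0,0,0,0,0,0],[0,0,1,1,2,2],[0,2,1,2,0,1],[0,1,2,0,2,1],[0,1,0,2,1,2],[0,2,2,1,1,0]],[0,1,5,3,2,4],[0,1,2,3,5,4],[0,0,0,0,0,0],[0,0,0,0,0,0]),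
 ([[0,0,0,0,0,0],[0,0,1,1,2,2],[0,2,1,2,0,1],[0,1,2,0,2,1],[0,2,2,1,1,0],[0,1,0,2,1,2]],[0,1,5,3,4,2],[0,1,2,3,5,4],[0,0,0,0,0,0],[0,0,0,0,0,0]),
 ([[0,0,0,0,0,0],[0,0,1,1,2,2],[0,2,1,2,0,1],[0,2,2,1,1,0],[0,1,0,2,1,2],[0,1,2,0,2,1]],[0,1,5,4,2,3],[0,1,2,3,5,4],[0,0,0,0,0,0],[0,0,0,0,0,0]),
 ([[0,0,0,0,0,0],[0,0,1,1,2,2],[0,2,1,2,0,1],[0,2,2,1,1,0],[0,1,2,0,2,1],[0,1,0,2,1,2]],[0,1,5,4,3,2],[0,1,2,3,5,4],[0,0,0,0,0,0],[0,0,0,0,0,0]),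
 ([[0,0,0,0,0,0],[0,0,1,1,2,2],[0,2,1,2,1,0],[0,1,0,2,2,1],[0,1,2,0,1,2],[0,2,2,1,0,1]],[0,1,5,2,3,4],[0,1,2,3,4,5],[0,0,0,0,0,0],[0,0,0,0,0,0]),
 ([[0,0,0,0,0,0],[0,0,1,1,2,2],[0,2,1,2,1,0],[0,1,0,2,2,1],[0,2,2,1,0,1],[0,1,2,0,1,2]],[0,1,5,2,4,3],[0,1,2,3,4,5],[0,0,0,0,0,0],[0,0,0,0,0,0]),
 ([[0,0,0,0,0,0],[0,0,1,1,2,2],[0,2,1,2,1,0],[0,1,2,0,1,2],[0,1,0,2,2,1],[0,2,2,1,0,1]],[0,1,5,3,2,4],[0,1,2,3,4,5],[0,0,0,0,0,0],[0,0,0,0,0,0]),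
 ([[0,0,0,0,0,0],[0,0,1,1,2,2],[0,2,1,2,1,0],[0,1,2,0,1,2],[0,2,2,1,0,1],[0,1,0,2,2,1]],[0,1,5,3,4,2],[0,1,2,3,4,5],[0,0,0,0,0,0],[0,0,0,0,0,0]),
 ([[0,0,0,0,0,0],[0,0,1,1,2,2],[0,2,1,2,1,0],[0,2,2,1,0,1],[0,1,0,2,2,1],[0,1,2,0,1,2]],[0,1,5,4,2,3],[0,1,2,3,4,5],[0,0,0,0,0,0],[0,0,0,0,0,0]),
 ([[0,0,0,0,0,0],[0,0,1,1,2,2],[0,2,1,2,1,0],[0,2,2,1,0,1],[0,1,2,0,1,2],[0,1,0,2,2,1]],[0,1,5,4,3,2],[0,1,2,3,4,5],[0,0,0,0,0,0],[0,0,0,0,0,0]),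
 ([[0,0,0,0,0,0],[0,0,1,1,2,2],[0,2,2,1,0,1],[0,1,0,2,2,1],[0,1,2,0,1,2],[0,2,1,2,1,0]],[0,1,4,2,3,5],[0,1,2,3,4,5],[0,0,0,0,0,0],[0,0,0,0,0,0]),
 ([[0,0,0,0,0,0],[0,0,1,1,2,2],[0,2,2,1,0,1],[0,1,0,2,2,1],[0,2,1,2,1,0],[0,1,2,0,1,2]],[0,1,4,2,5,3],[0,1,2,3,4,5],[0,0,0,0,0,0],[0,0,0,0,0,0]),
 ([[0,0,0,0,0,0],[0,0,1,1,2,2],[0,2,2,1,0,1],[0,1,2,0,1,2],[0,1,0,2,2,1],[0,2,1,2,1,0]],[0,1,4,3,2,5],[0,1,2,3,4,5],[0,0,0,0,0,0],[0,0,0,0,0,0]),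
 ([[0,0,0,0,0,0],[0,0,1,1,2,2],[0,2,2,1,0,1],[0,1,2,0,1,2],[0,2,1,2,1,0],[0,1,0,2,2,1]],[0,1,4,3,5,2],[0,1,2,3,4,5],[0,0,0,0,0,0],[0,0,0,0,0,0]),
 ([[0,0,0,0,0,0],[0,0,1,1,2,2],[0,2,2,1,0,1],[0,2,1,2,1,0],[0,1,0,2,2,1],[0,1,2,0,1,2]],[0,1,4,5,2,3],[0,1,2,3,4,5],[0,0,0,0,0,0],[0,0,0,0,0,0]),
 ([[0,0,0,0,0,0],[0,0,1,1,2,2],[0,2,2,1,0,1],[0,2,1,2,1,0],[0,1,2,0,1,2],[0,1,0,2,2,1]],[0,1,4,5,3,2],[0,1,2,3,4,5],[0,0,0,0,0,0],[0,0,0,0,0,0]),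
 ([[0,0,0,0,0,0],[0,0,1,1,2,2],[0,2,2,1,1,0],[0,1,0,2,1,2],[0,1,2,0,2,1],[0,2,1,2,0,1]],[0,1,4,2,3,5],[0,1,2,3,5,4],[0,0,0,0,0,0],[0,0,0,0,0,0]),
 ([[0,0,0,0,0,0],[0,0,1,1,2,2],[0,2,2,1,1,0],[0,1,0,2,1,2],[0,2,1,2,0,1],[0,1,2,0,2,1]],[0,1,4,2,5,3],[0,1,2,3,5,4],[0,0,0,0,0,0],[0,0,0,0,0,0]),
 ([[0,0,0,0,0,0],[0,0,1,1,2,2],[0,2,2,1,1,0],[0,1,2,0,2,1],[0,1,0,2,1,2],[0,2,1,2,0,1]],[0,1,4,3,2,5],[0,1,2,3,5,4],[0,0,0,0,0,0],[0,0,0,0,0,0]),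
 ([[0,0,0,0,0,0],[0,0,1,1,2,2],[0,2,2,1,1,0],[0,1,2,0,2,1],[0,2,1,2,0,1],[0,1,0,2,1,2]],[0,1,4,3,5,2],[0,1,2,3,5,4],[0,0,0,0,0,0],[0,0,0,0,0,0]),
 ([[0,0,0,0,0,0],[0,0,1,1,2,2],[0,2,2,1,1,0],[0,2,1,2,0,1],[0,1,0,2,1,2],[0,1,2,0,2,1]],[0,1,4,5,2,3],[0,1,2,3,5,4],[0,0,0,0,0,0],[0,0,0,0,0,0]),
 ([[0,0,0,0,0,0],[0,0,1,1,2,2],[0,2,2,1,1,0],[0,2,1,2,0,1],[0,1,2,0,2,1],[0,1,0,2,1,2]],[0,1,4,5,3,2],[0,1,2,3,5,4],[0,0,0,0,0,0],[0,0,0,0,0,0])]"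

definition pok :: "nat list \<Rightarrow> nat list \<Rightarrow> bool" where
  "pok v p = (validp p \<and> p ! 0 = 0 \<and> map (\<lambda>j. v ! (p ! j)) [0..<6] = canon)"

definition verify :: "nat list list \<Rightarrow> nat list \<times> nat list \<times> nat list \<times> nat list \<Rightarrow> bool" where
  "verify R c = (case c of (sg, tu, r, s) \<Rightarrow> validp sg \<and> validp tu \<and> length r = 6 \<and> length s = 6 \<and>
     list_all (\<lambda>i. list_all (\<lambda>j. R ! i ! j = (r ! i + tao_exps ! (sg ! i) ! (tu ! j) + s ! j) mod 3) [0..<6]) [0..<6])"

definition certok :: "nat list list \<Rightarrow> bool" where
  "certok R = (case map_of ctable R of Some c \<Rightarrow> verify R c | None \<Rightarrow> False)"

lemma ptable_ok: "list_all (\<lambda>v. case map_of ptable v of Some p \<Rightarrow> pok v p | None \<Rightarrow> False) Vl"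
  by code_simp

lemma ctable_ok: "list_all (\<lambda>a. list_all (\<lambda>b. list_all (\<lambda>c. list_all (\<lambda>d.
    certok [[0,0,0,0,0,0], canon, a, b, c, d])
    (filter (compat3 c) (filter (compat3 b) (filter (compat3 a) Wl))))
    (filter (compat3 b) (filter (compat3 a) Wl))) (filter (compat3 a) Wl)) Wl"
  by code_simp


lemma om_eq: "omega3 = Complex (-1/2) (sqrt 3 / 2)"
proof -
  have "omega3 = cis (2*pi/3)"
    unfolding omega3_def cis_conv_exp by (simp add: field_simps)
  also have "\<dots> = Complex (-1/2) (sqrt 3 / 2)"
    by (simp add: cis.ctr cos_120 sin_120)
  finally show ?thesis .
qed

lemma C2: "Complex (- (1/2)) (sqrt 3 / 2) ^ 2 = Complex (- (1/2)) (- (sqrt 3 / 2))"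
  by (simp add: complex_eq_iff Re_power2 Im_power2 power2_eq_square)

lemma om2_eq: "omega3 ^ 2 = Complex (-1/2) (- sqrt 3 / 2)"
  by (simp add: om_eq C2)

lemma om3: "omega3 ^ 3 = 1"
proof -
  have "omega3 ^ 3 = omega3 ^ 2 * omega3" by (simp add: power3_eq_cube power2_eq_square)
  also have "\<dots> = 1" by (simp add: om_eq C2 complex_eq_iff field_simps)
  finally show ?thesis .
qed

lemma om_norm: "cmod (omega3 ^ k) = 1"
proof -
  have "cmod omega3 = 1" by (simp add: om_eq cmod_def power2_eq_square)
  then show ?thesis by (simp add: norm_power)
qed

lemma om_mod: "omega3 ^ (a mod 3) = omega3 ^ a"
proof -
  have "omega3 ^ a = omega3 ^ (3 * (a div 3) + a mod 3)" by simp
  also have "\<dots> = omega3 ^ (3 * (a div 3)) * omega3 ^ (a mod 3)"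
    by (rule power_add)
  also have "omega3 ^ (3 * (a div 3)) = (omega3 ^ 3) ^ (a div 3)"
    by (rule power_mult)
  finally show ?thesis by (simp add: om3)
qed

lemma om_cong: "a mod 3 = b mod 3 \<Longrightarrow> omega3 ^ a = omega3 ^ b"
  by (metis om_mod)

lemma om_cnj: "cnj (omega3 ^ a) = omega3 ^ (2 * a)"
proof -
  have "cnj omega3 = omega3 ^ 2" by (simp add: om_eq C2 complex_eq_iff)
  then show ?thesis by (simp add: power_mult)
qed

lemma om_distinct: "omega3 \<noteq> 1" "omega3 ^ 2 \<noteq> 1" "omega3 \<noteq> omega3 ^ 2"
  by (simp_all add: om_eq C2 complex_eq_iff)

lemma lists3_mem: "\<forall>x\<in>set xs. x < 3 \<Longrightarrow> xs \<in> set (lists3 (length xs))"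
proof (induction xs)
  case Nil then show ?case by simp
next
  case (Cons a xs)
  then have "a \<in> {0,1,2}" by auto
  with Cons show ?case by auto
qed

lemma sum_om_list:
  assumes "\<forall>x\<in>set xs. x < 3"
  shows "(\<Sum>x\<leftarrow>xs. omega3 ^ x) =
     of_nat (length (filter (\<lambda>x. x = 0) xs)) + of_nat (length (filter (\<lambda>x. x = 1) xs)) * omega3
       + of_nat (length (filter (\<lambda>x. x = 2) xs)) * omega3 ^ 2
   \<and> length xs = length (filter (\<lambda>x. x = 0) xs) + length (filter (\<lambda>x. x = 1) xs) + length (filter (\<lambda>x. x = 2) xs)"
  using assms
proof (induction xs)
  case Nil then show ?case by simp
next
  case (Cons a xs)
  then have "a = 0 \<or> a = 1 \<or> a = 2" by auto
  with Cons show ?case by (auto simp: algebra_simps)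
qed

lemma bal_of_sum:
  assumes "\<forall>x\<in>set xs. x < 3" "length xs = 6" "(\<Sum>x\<leftarrow>xs. omega3 ^ x) = 0"
  shows "bal xs"
proof -
  define a where "a = length (filter (\<lambda>x. x = 0) xs)"
  define b where "b = length (filter (\<lambda>x. x = 1) xs)"
  define c where "c = length (filter (\<lambda>x. x = 2) xs)"
  from sum_om_list[OF assms(1)] assms(2,3)
  have 1: "of_nat a + of_nat b * omega3 + of_nat c * omega3 ^ 2 = 0" and 2: "a + b + c = 6"
    by (auto simp: a_def b_def c_def)
  from 1 have "Re (of_nat a + of_nat b * omega3 + of_nat c * omega3 ^ 2) = 0"
    "Im (of_nat a + of_nat b * omega3 + of_nat c * omega3 ^ 2) = 0" by simp_all
  then have "real a - real b / 2 - real c / 2 = 0" "real b * sqrt 3 / 2 - real c * sqrt 3 / 2 = 0"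
    by (simp_all add: om_eq C2)
  then have "b = c" "2 * a = b + c" by (simp_all add: field_simps)
  with 2 show ?thesis unfolding bal_def a_def[symmetric] b_def[symmetric] c_def[symmetric] by simp
qed

lemma validp_permutes:
  assumes "validp p"
  shows "(\<lambda>j. if j < 6 then p ! j else j) permutes {..<6}"
proof (rule bij_imp_permutes)
  from assms have len: "length p = 6" and dist: "distinct p" and lt: "\<forall>x\<in>set p. x < 6"
    by (auto simp: validp_def list_all_iff)
  have sp: "set p = {..<6}"
  proof (rule card_subset_eq)
    show "set p \<subseteq> {..<6}" using lt by auto
    show "card (set p) = card {..<6::nat}" using dist len by (simp add: distinct_card)
  qed simp
  have inj: "inj_on (\<lambda>j. if j < 6 then p ! j else j) {..<6}"
    using dist len by (auto simp: inj_on_def nth_eq_iff_index_eq)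
  have img: "(\<lambda>j. if j < 6 then p ! j else j) ` {..<6} = {..<6}"
  proof -
    have "(\<lambda>j. if j < 6 then p ! j else j) ` {..<6} = (\<lambda>j. p ! j) ` {..<length p}"
      using len by (auto intro!: image_cong)
    also have "\<dots> = set p" by (auto simp: set_conv_nth)
    finally show ?thesis using sp by (simp add: atLeast0LessThan)
  qed
  show "bij_betw (\<lambda>j. if j < 6 then p ! j else j) {..<6} {..<6}"
    using inj img by (simp add: bij_betw_def)
qed auto

lemma bal_mset: "mset xs = mset ys \<Longrightarrow> bal xs = bal ys"
proof -
  assume "mset xs = mset ys"
  then have "\<And>P. mset (filter P xs) = mset (filter P ys)" by simp
  then have "\<And>P. length (filter P xs) = length (filter P ys)"
    by (metis size_mset)
  then show ?thesis by (simp add: bal_def)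
qed

lemma bal_perm:
  assumes "validp p" "bal (map g [0..<6])"
  shows "bal (map (\<lambda>k. g (p ! k)) [0..<6])"
proof -
  from assms(1) have len: "length p = 6" and dist: "distinct p" and lt: "\<forall>x\<in>set p. x < 6"
    by (auto simp: validp_def list_all_iff)
  have sp: "set p = {..<6}"
  proof (rule card_subset_eq)
    show "set p \<subseteq> {..<6}" using lt by auto
    show "card (set p) = card {..<6::nat}" using dist len by (simp add: distinct_card)
  qed simp
  have "set p = set [0..<6]" using sp by (simp add: atLeast0LessThan)
  then have "mset p = mset [0..<6]"
    using set_eq_iff_mset_eq_distinct[OF dist distinct_upt] by blast
  moreover have "map (\<lambda>k. g (p ! k)) [0..<6] = map g p"
    using len by (simp add: list_eq_iff_nth_eq)
  ultimately have "mset (map (\<lambda>k. g (p ! k)) [0..<6]) = mset (map g [0..<6])" by simp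
  with assms(2) bal_mset show ?thesis by blast
qed

lemma compat_map: "compat3 (map F xs) (map G xs) = bal (map (\<lambda>k. (F k + 2 * G k) mod 3) xs)"
proof -
  have "map (\<lambda>(x,y). (x + 2*y) mod 3) (zip (map F xs) (map G xs)) = map (\<lambda>k. (F k + 2 * G k) mod 3) xs"
    by (induction xs) auto
  then show ?thesis by (simp add: compat3_def)
qed

lemma equiv_lemma:
  fixes S V :: "nat \<Rightarrow> nat \<Rightarrow> complex" and c d :: "nat \<Rightarrow> complex"
  assumes sg: "\<sigma> permutes {..<n}" and tu: "\<tau> permutes {..<n}"
    and c: "\<forall>i<n. cmod (c i) = 1" and d: "\<forall>j<n. cmod (d j) = 1"
    and eq: "\<forall>i<n. \<forall>j<n. S i j = c i * V (\<sigma> i) (\<tau> j) * d j"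
  shows "complex_equivalent n S V"
proof -
  define P where "P = (\<lambda>i k. if k = \<sigma> i then c i else 0)"
  define Q where "Q = (\<lambda>k j. if k = \<tau> j then d j else 0)"
  have sgl: "\<sigma> i < n" if "i < n" for i using permutes_in_image[OF sg] that by simp
  have tul: "\<tau> j < n" if "j < n" for j using permutes_in_image[OF tu] that by simp
  have c0: "c i \<noteq> 0" if "i < n" for i using c that by fastforce
  have d0: "d j \<noteq> 0" if "j < n" for j using d that by fastforce
  have cc: "c i * cnj (c i) = 1" if "i < n" for i
    using complex_norm_square[of "c i"] c that by simp
  have dd: "d j * cnj (d j) = 1" if "j < n" for j
    using complex_norm_square[of "d j"] d that by simp
  have sginj: "\<sigma> i = \<sigma> i' \<longleftrightarrow> i = i'" for i i'
    using permutes_inj[OF sg] by (auto simp: inj_def)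
  have tuinj: "\<tau> i = \<tau> i' \<longleftrightarrow> i = i'" for i i'
    using permutes_inj[OF tu] by (auto simp: inj_def)
  have PV: "mat_mult n P V i j = c i * V (\<sigma> i) j" if "i < n" for i j
  proof -
    have "mat_mult n P V i j = (\<Sum>k<n. if k = \<sigma> i then c i * V k j else 0)"
      unfolding mat_mult_def P_def by (intro sum.cong) auto
    also have "\<dots> = c i * V (\<sigma> i) j" using sgl[OF that] by (simp add: sum.delta)
    finally show ?thesis .
  qed
  have PVQ: "mat_mult n (mat_mult n P V) Q i j = c i * V (\<sigma> i) (\<tau> j) * d j" if "i < n" "j < n" for i j
  proof -
    have "mat_mult n (mat_mult n P V) Q i j = (\<Sum>k<n. if k = \<tau> j then c i * V (\<sigma> i) k * d j else 0)"
      unfolding mat_mult_def[of n "mat_mult n P V"] Q_def using PV[OF that(1)] by (intro sum.cong) auto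
    also have "\<dots> = c i * V (\<sigma> i) (\<tau> j) * d j" using tul[OF that(2)] by (simp add: sum.delta)
    finally show ?thesis .
  qed
  have mP: "monomial_unitary n P"
    unfolding monomial_unitary_def
  proof (intro conjI allI impI)
    show "unitary n P" unfolding unitary_def mat_eq_def
    proof (intro allI impI)
      fix i i' assume i: "i < n" and i': "i' < n"
      have "mat_mult n P (adjoint P) i i' = (\<Sum>k<n. if k = \<sigma> i then (if \<sigma> i = \<sigma> i' then c i * cnj (c i') else 0) else 0)"
        unfolding mat_mult_def adjoint_def P_def by (intro sum.cong) auto
      also have "\<dots> = (if \<sigma> i = \<sigma> i' then c i * cnj (c i') else 0)"
        using sgl[OF i] by (simp add: sum.delta)
      also have "\<dots> = id_mat i i'" using cc[OF i] sginj by (auto simp: id_mat_def)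
      finally show "mat_mult n P (adjoint P) i i' = id_mat i i'" .
    qed
  next
    fix i assume i: "i < n"
    show "\<exists>!j. j < n \<and> P i j \<noteq> 0"
      using sgl[OF i] c0[OF i] by (auto simp: P_def)
  next
    fix j assume j: "j < n"
    have "inv \<sigma> j < n" using permutes_in_image[OF permutes_inv[OF sg]] j by simp
    moreover have "\<sigma> (inv \<sigma> j) = j" using permutes_inverses(1)[OF sg] by simp
    ultimately show "\<exists>!i. i < n \<and> P i j \<noteq> 0"
      using c0 sginj by (auto simp: P_def intro!: exI[of _ "inv \<sigma> j"])
  next
    fix i j assume "i < n" "j < n" "P i j \<noteq> 0"
    then show "cmod (P i j) = 1" using c by (auto simp: P_def split: if_splits)
  qed
  have mQ: "monomial_unitary n Q"
    unfolding monomial_unitary_def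
  proof (intro conjI allI impI)
    show "unitary n Q" unfolding unitary_def mat_eq_def
    proof (intro allI impI)
      fix k k' assume k: "k < n" and k': "k' < n"
      define j0 where "j0 = inv \<tau> k"
      have j0: "j0 < n" using permutes_in_image[OF permutes_inv[OF tu]] k by (simp add: j0_def)
      have tj0: "\<tau> j0 = k" using permutes_inverses(1)[OF tu] by (simp add: j0_def)
      have "mat_mult n Q (adjoint Q) k k' = (\<Sum>j<n. if j = j0 then (if k' = k then d j0 * cnj (d j0) else 0) else 0)"
        unfolding mat_mult_def adjoint_def Q_def
        by (intro sum.cong) (use tj0 tuinj in auto)
      also have "\<dots> = (if k' = k then d j0 * cnj (d j0) else 0)"
        using j0 by (simp add: sum.delta)
      also have "\<dots> = id_mat k k'" using dd[OF j0] by (auto simp: id_mat_def)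
      finally show "mat_mult n Q (adjoint Q) k k' = id_mat k k'" .
    qed
  next
    fix k assume k: "k < n"
    have "inv \<tau> k < n" using permutes_in_image[OF permutes_inv[OF tu]] k by simp
    moreover have "\<tau> (inv \<tau> k) = k" using permutes_inverses(1)[OF tu] by simp
    ultimately show "\<exists>!j. j < n \<and> Q k j \<noteq> 0"
      using d0 tuinj by (auto simp: Q_def intro!: exI[of _ "inv \<tau> k"])
  next
    fix j assume j: "j < n"
    show "\<exists>!i. i < n \<and> Q i j \<noteq> 0"
      using tul[OF j] d0[OF j] by (auto simp: Q_def)
  next
    fix i j assume "i < n" "j < n" "Q i j \<noteq> 0"
    then show "cmod (Q i j) = 1" using d by (auto simp: Q_def split: if_splits)
  qed
  have "mat_eq n S (mat_mult n (mat_mult n P V) Q)" using eq PVQ by (simp add: mat_eq_def)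
  then show ?thesis using mP mQ unfolding complex_equivalent_def by blast
qed

lemma upt6: "[0..<6] = [0,1,2,3,4,5::nat]" by (simp add: upt_rec)

theorem mainTheorem1:
  fixes S :: "nat \<Rightarrow> nat \<Rightarrow> complex"
  assumes "is_CHM 6 S"
    and "\<forall>i<6. \<forall>j<6. S i j \<in> {1, omega3, omega3 ^ 2}"
  shows "complex_equivalent 6 S tao6"
proof -
  define e where "e = (\<lambda>i j. if S i j = 1 then 0 else if S i j = omega3 then 1 else (2::nat))"
  have eS: "S i j = omega3 ^ e i j" if "i < 6" "j < 6" for i j
    using assms(2) that om_distinct by (auto simp: e_def)
  define f where "f = (\<lambda>i j. (e i j + 2 * e i 0 + 2 * e 0 j + e 0 0) mod 3)"
  define c0 where "c0 = (\<lambda>i. omega3 ^ (e i 0 + 2 * e 0 0))"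
  define d0 where "d0 = (\<lambda>j. omega3 ^ e 0 j)"
  have Sf: "S i j = c0 i * omega3 ^ f i j * d0 j" if "i < 6" "j < 6" for i j
  proof -
    have "c0 i * omega3 ^ f i j * d0 j = omega3 ^ (e i 0 + 2 * e 0 0 + f i j + e 0 j)"
      by (simp add: c0_def d0_def power_add)
    also have "\<dots> = omega3 ^ (e i j)"
    proof (rule om_cong)
      have "(e i 0 + 2 * e 0 0 + f i j + e 0 j) mod 3 = (e i 0 + 2 * e 0 0 + (e i j + 2 * e i 0 + 2 * e 0 j + e 0 0) + e 0 j) mod 3"
        unfolding f_def by (metis mod_add_left_eq mod_add_right_eq add.assoc)
      also have "e i 0 + 2 * e 0 0 + (e i j + 2 * e i 0 + 2 * e 0 j + e 0 0) + e 0 j = e i j + (e i 0 + e 0 0 + e 0 j) * 3" by simp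
      also have "(e i j + (e i 0 + e 0 0 + e 0 j) * 3) mod 3 = e i j mod 3" by (rule mod_mult_self1)
      finally show "(e i 0 + 2 * e 0 0 + f i j + e 0 j) mod 3 = e i j mod 3" .
    qed
    finally show ?thesis using eS[OF that] by simp
  qed
  have f0j: "f 0 j = 0" for j
  proof -
    have "e 0 j + 2 * e 0 0 + 2 * e 0 j + e 0 0 = (e 0 j + e 0 0) * 3" by simp
    then show ?thesis unfolding f_def by simp
  qed
  have fi0: "f i 0 = 0" for i
  proof -
    have "e i 0 + 2 * e i 0 + 2 * e 0 0 + e 0 0 = (e i 0 + e 0 0) * 3" by simp
    then show ?thesis unfolding f_def by simp
  qed
  have flt: "f i j < 3" for i j unfolding f_def by simp
  have nc0: "cmod (c0 i) = 1" for i by (simp add: c0_def om_norm)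
  have nd0: "cmod (d0 i) = 1" for i by (simp add: d0_def om_norm)
  have orth: "(\<Sum>k<6. omega3 ^ ((f i k + 2 * f i' k) mod 3)) = 0"
    if i: "i < 6" and i': "i' < 6" and ne: "i \<noteq> i'" for i i'
  proof -
    have CHM: "(\<Sum>k<6. S i k * cnj (S i' k)) = 0"
      using assms(1) i i' ne unfolding is_CHM_def mat_eq_def mat_mult_def adjoint_def id_mat_def
      by auto
    have tm: "S i k * cnj (S i' k) = (c0 i * cnj (c0 i')) * omega3 ^ ((f i k + 2 * f i' k) mod 3)"
      if k: "k < 6" for k
    proof -
      have dd: "d0 k * cnj (d0 k) = 1" using complex_norm_square[of "d0 k"] nd0 by simp
      have "omega3 ^ ((f i k + 2 * f i' k) mod 3) = omega3 ^ f i k * omega3 ^ (2 * f i' k)"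
        by (simp only: om_mod power_add)
      then have "omega3 ^ ((f i k + 2 * f i' k) mod 3) = omega3 ^ f i k * cnj (omega3 ^ f i' k)"
        by (simp only: om_cnj)
      moreover have "S i k * cnj (S i' k) = (c0 i * cnj (c0 i')) * (omega3 ^ f i k * cnj (omega3 ^ f i' k)) * (d0 k * cnj (d0 k))"
        using Sf[OF i k] Sf[OF i' k] by (simp add: algebra_simps)
      ultimately show ?thesis using dd by simp
    qed
    have "(c0 i * cnj (c0 i')) * (\<Sum>k<6. omega3 ^ ((f i k + 2 * f i' k) mod 3)) = 0"
      using CHM tm by (simp add: sum_distrib_left)
    moreover have "c0 i * cnj (c0 i') \<noteq> 0" using nc0[of i] nc0[of i'] by auto
    ultimately show ?thesis by simp
  qed
  have balf: "bal (map (\<lambda>k. (f i k + 2 * f i' k) mod 3) [0..<6])"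
    if "i < 6" "i' < 6" "i \<noteq> i'" for i i'
  proof (rule bal_of_sum)
    show "\<forall>x\<in>set (map (\<lambda>k. (f i k + 2 * f i' k) mod 3) [0..<6]). x < 3" by auto
    show "length (map (\<lambda>k. (f i k + 2 * f i' k) mod 3) [0..<6]) = 6" by simp
    show "(\<Sum>x\<leftarrow>map (\<lambda>k. (f i k + 2 * f i' k) mod 3) [0..<6]. omega3 ^ x) = 0"
      using orth[OF that] by (simp add: sum_set_upt_conv_sum_list_nat[symmetric] atLeast0LessThan o_def)
  qed
  have rowV: "map (f i) [0..<6] \<in> set Vl" if "0 < i" "i < 6" for i
  proof -
    have "map (f i) [0..<6] \<in> set (lists3 6)"
      using lists3_mem[of "map (f i) [0..<6]"] flt by simp
    moreover have "hd (map (f i) [0..<6]) = 0" using fi0 by (simp add: upt6)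
    moreover have "bal (map (f i) [0..<6])"
    proof -
      have eqm: "map (\<lambda>k. (f i k + 2 * f 0 k) mod 3) [0..<6] = map (f i) [0..<6]"
        using f0j flt by simp
      have "bal (map (\<lambda>k. (f i k + 2 * f 0 k) mod 3) [0..<6])" using balf[of i 0] that by simp
      then show ?thesis by (simp only: eqm)
    qed
    ultimately show ?thesis by (simp add: Vl_def)
  qed
  define row1 where "row1 = map (f 1) [0..<6]"
  obtain p where pm: "map_of ptable row1 = Some p" and pk: "pok row1 p"
    using ptable_ok rowV[of 1] unfolding list_all_iff row1_def
    by (auto split: option.splits)
  have vp: "validp p" and p0: "p ! 0 = 0" and pc: "map (\<lambda>j. row1 ! (p ! j)) [0..<6] = canon"
    using pk by (auto simp: pok_def)
  have plt: "p ! j < 6" if "j < 6" for j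
    using vp that by (auto simp: validp_def list_all_iff)
  define pp where "pp = (\<lambda>j. if j < 6 then p ! j else j)"
  have ppp: "pp permutes {..<6}" unfolding pp_def by (rule validp_permutes[OF vp])
  define R where "R = (\<lambda>i. map (\<lambda>j. f i (p ! j)) [0..<6])"
  have R0: "R 0 = [0,0,0,0,0,0]" using f0j by (simp add: R_def upt6)
  have R1: "R 1 = canon"
  proof -
    have "R 1 = map (\<lambda>j. row1 ! (p ! j)) [0..<6]"
      unfolding R_def row1_def using plt by (auto intro!: map_cong)
    then show ?thesis using pc by simp
  qed
  have Rcompat: "compat3 (R a) (R b)" if "a < 6" "b < 6" "a \<noteq> b" for a b
  proof -
    have "compat3 (R a) (R b) = bal (map (\<lambda>k. (\<lambda>k. (f a k + 2 * f b k) mod 3) (p ! k)) [0..<6])"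
      unfolding R_def compat_map by simp
    then show ?thesis using bal_perm[OF vp balf[OF that]] by simp
  qed
  have RV: "R i \<in> set Vl" if "1 < i" "i < 6" for i
  proof -
    have "R i \<in> set (lists3 6)"
      using lists3_mem[of "R i"] flt by (simp add: R_def)
    moreover have "hd (R i) = 0" using fi0 p0 by (simp add: upt6 R_def)
    moreover have "bal (R i)"
    proof -
      have "compat3 (R i) (R 0)" using Rcompat[of i 0] that by simp
      moreover have "map (\<lambda>(x, y). (x + 2 * y) mod 3) (zip (R i) (R 0)) = R i"
        using flt by (simp add: R_def upt6 f0j)
      ultimately show ?thesis by (simp add: compat3_def)
    qed
    ultimately show ?thesis by (simp add: Vl_def)
  qed
  have RW: "R i \<in> set Wl" if "1 < i" "i < 6" for i
    using RV[OF that] Rcompat[of 1 i] that R1 by (simp add: Wl_def)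
  have "certok [[0,0,0,0,0,0], canon, R 2, R 3, R 4, R 5]"
    using ctable_ok unfolding list_all_iff
    using RW[of 2] RW[of 3] RW[of 4] RW[of 5] Rcompat[of 2 3] Rcompat[of 2 4] Rcompat[of 2 5]
      Rcompat[of 3 4] Rcompat[of 3 5] Rcompat[of 4 5]
    by simp
  moreover have "R (Suc 0) = canon" using R1 by simp
  ultimately have "certok (map R [0..<6])" by (simp add: upt6 R0)
  then obtain sg tu r s where vf: "verify (map R [0..<6]) (sg, tu, r, s)"
    unfolding certok_def by (auto split: option.splits)
  then have vsg: "validp sg" and vtu: "validp tu"
    and feq: "\<And>i j. i < 6 \<Longrightarrow> j < 6 \<Longrightarrow> f i (p ! j) = (r ! i + tao_exps ! (sg ! i) ! (tu ! j) + s ! j) mod 3"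
    unfolding verify_def list_all_iff by (auto simp: R_def)
  define \<sigma> where "\<sigma> = (\<lambda>i. if i < 6 then sg ! i else i)"
  define \<tau>1 where "\<tau>1 = (\<lambda>i. if i < 6 then tu ! i else i)"
  have sgp: "\<sigma> permutes {..<6}" unfolding \<sigma>_def by (rule validp_permutes[OF vsg])
  have tup: "\<tau>1 permutes {..<6}" unfolding \<tau>1_def by (rule validp_permutes[OF vtu])
  show ?thesis
  proof (rule equiv_lemma[where \<sigma> = \<sigma> and \<tau> = "\<tau>1 \<circ> inv pp"
        and c = "\<lambda>i. c0 i * omega3 ^ (r ! i)" and d = "\<lambda>j. omega3 ^ (s ! (inv pp j)) * d0 j"])
    show "\<sigma> permutes {..<6}" by (rule sgp)
    show "\<tau>1 \<circ> inv pp permutes {..<6}" by (rule permutes_compose[OF permutes_inv[OF ppp] tup])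
    show "\<forall>i<6. cmod (c0 i * omega3 ^ (r ! i)) = 1" by (simp add: norm_mult nc0 om_norm)
    show "\<forall>j<6. cmod (omega3 ^ (s ! (inv pp j)) * d0 j) = 1" by (simp add: norm_mult nd0 om_norm)
    show "\<forall>i<6. \<forall>j<6. S i j = c0 i * omega3 ^ (r ! i) * tao6 (\<sigma> i) ((\<tau>1 \<circ> inv pp) j) * (omega3 ^ (s ! inv pp j) * d0 j)"
    proof (intro allI impI)
      fix i j :: nat assume i: "i < 6" and j: "j < 6"
      define j0 where "j0 = inv pp j"
      have j0: "j0 < 6" using permutes_in_image[OF permutes_inv[OF ppp]] j by (simp add: j0_def)
      have pj0: "p ! j0 = j" using permutes_inverses(1)[OF ppp, of j] j0 by (simp add: j0_def pp_def)
      have "omega3 ^ f i j = omega3 ^ (r ! i + tao_exps ! (sg ! i) ! (tu ! j0) + s ! j0)"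
        using feq[OF i j0] pj0 by (simp add: om_mod)
      then have "omega3 ^ f i j = omega3 ^ (r ! i) * tao6 (\<sigma> i) ((\<tau>1 \<circ> inv pp) j) * omega3 ^ (s ! j0)"
        using i j0 by (simp add: power_add tao6_def \<sigma>_def \<tau>1_def j0_def[symmetric])
      then show "S i j = c0 i * omega3 ^ (r ! i) * tao6 (\<sigma> i) ((\<tau>1 \<circ> inv pp) j) * (omega3 ^ (s ! inv pp j) * d0 j)"
        using Sf[OF i j] by (simp add: j0_def[symmetric] algebra_simps)
    qed
  qed
qed
end
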